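(* Let $\mu\in C^1[0,1]$ with $\mu\ge0$ and $\mu(1)\ne0$, and let $\Phi(z)=\int_0^1\mu(\alpha)z^\alpha\,d\alpha$. Then for every $z$ with $\operatorname{Re}z=\gamma>0$, $\operatorname{Re}(\Phi^{1/2}(z))\ge\frac{\sqrt2}{2}|\Phi^{1/2}(z)|$.
   Context: Powers $z^\alpha$ and $\Phi^{1/2}$ use the principal branch, with $\arg z\in(-\pi,\pi]$. *)

theory Defs
  imports "HOL-Analysis.Analysis"
begin

definition C1_on_unit :: "(real \<Rightarrow> real) \<Rightarrow> bool" where
  "C1_on_unit \<mu> \<longleftrightarrow> (\<exists>\<mu>'. (\<forall>x\<in>{0..1}. (\<mu> has_real_derivative \<mu>' x) (at x within {0..1}))
                         \<and> continuous_on {0..1} \<mu>')"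

definition Phi :: "(real \<Rightarrow> real) \<Rightarrow> complex \<Rightarrow> complex" where
  "Phi \<mu> z = integral {0..1} (\<lambda>\<alpha>. complex_of_real (\<mu> \<alpha>) * z powr complex_of_real \<alpha>)"

end

theory Submission
  imports Defs
begin

lemma Re_powr_nonneg:
  fixes z :: complex and a :: real
  assumes "Re z > 0" "0 \<le> a" "a \<le> 1"
  shows "0 \<le> Re (z powr complex_of_real a)"
proof -
  have z0: "z \<noteq> 0" using assms by auto
  have b: "\<bar>Im (Ln z)\<bar> < pi/2" using Re_Ln_pos_lt_imp assms by blast
  have "\<bar>a * Im (Ln z)\<bar> \<le> pi/2"
  proof -
    have "\<bar>a * Im (Ln z)\<bar> = a * \<bar>Im (Ln z)\<bar>" using assms by (simp add: abs_mult)
    also have "\<dots> \<le> 1 * (pi/2)" using assms b by (intro mult_mono) auto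
    finally show ?thesis by simp
  qed
  hence "0 \<le> cos (a * Im (Ln z))" by (intro cos_ge_zero) auto
  thus ?thesis using z0 by (simp add: powr_def Re_exp)
qed

lemma Re_Phi_nonneg:
  assumes "\<forall>\<alpha>\<in>{0..1}. \<mu> \<alpha> \<ge> 0" "Re z > 0"
  shows "0 \<le> Re (Phi \<mu> z)"
proof (cases "(\<lambda>\<alpha>. complex_of_real (\<mu> \<alpha>) * z powr complex_of_real \<alpha>) integrable_on {0..1}")
  case True
  then obtain I where I: "((\<lambda>\<alpha>. complex_of_real (\<mu> \<alpha>) * z powr complex_of_real \<alpha>) has_integral I) {0..1}"
    by blast
  have "((\<lambda>\<alpha>. Re (complex_of_real (\<mu> \<alpha>) * z powr complex_of_real \<alpha>)) has_integral Re I) {0..1}"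
    using has_integral_linear[OF I bounded_linear_Re] by (simp add: o_def)
  moreover have "\<And>x. x \<in> {0..1} \<Longrightarrow> 0 \<le> Re (complex_of_real (\<mu> x) * z powr complex_of_real x)"
    using assms Re_powr_nonneg by simp
  ultimately have "0 \<le> Re I" by (rule has_integral_nonneg)
  thus ?thesis using I unfolding Phi_def by (simp add: integral_unique)
next
  case False
  thus ?thesis unfolding Phi_def by (simp add: not_integrable_integral)
qed

theorem mainTheorem4:
  fixes \<mu> :: "real \<Rightarrow> real" and z :: complex
  assumes "C1_on_unit \<mu>"
    and "\<forall>\<alpha>\<in>{0..1}. \<mu> \<alpha> \<ge> 0"
    and "\<mu> 1 \<noteq> 0"
    and "Re z > 0"
  shows "Re (Phi \<mu> z powr (1/2)) \<ge> sqrt 2 / 2 * cmod (Phi \<mu> z powr (1/2))"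
proof (cases "Phi \<mu> z = 0")
  case True thus ?thesis by simp
next
  case False
  define P where "P = Phi \<mu> z"
  have P0: "P \<noteq> 0" using False P_def by simp
  have "0 \<le> Re P" using Re_Phi_nonneg assms P_def by blast
  hence b: "\<bar>Im (Ln P)\<bar> \<le> pi/2" using Re_Ln_pos_le P0 by blast
  have "cos (pi/4) \<le> cos (\<bar>Im (Ln P) / 2\<bar>)"
    using b by (intro cos_monotone_0_pi_le) auto
  moreover have "cos (\<bar>Im (Ln P) / 2\<bar>) = cos (Im (Ln P) / 2)" by (simp add: abs_if)
  ultimately have c: "sqrt 2 / 2 \<le> cos (Im (Ln P) / 2)" by (simp add: cos_45)
  have e: "P powr (1/2) = exp (Ln P / 2)" using P0 by (simp add: powr_def)
  have "Re (P powr (1/2)) = exp (Re (Ln P) / 2) * cos (Im (Ln P) / 2)"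
    by (simp add: e Re_exp)
  moreover have "cmod (P powr (1/2)) = exp (Re (Ln P) / 2)" by (simp add: e)
  ultimately show ?thesis using c unfolding P_def[symmetric]
    by (simp add: mult.commute mult_left_mono)
qed

end
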